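(* Let $\sigma$ be the morphism on $\{a,b,c\}$ given by $\sigma(a)=acaba$, $\sigma(b)=bac$, $\sigma(c)=cab$. Then the infinite fixed point of $\sigma$ beginning with $a$ is $4$-automatic, and hence $2$-automatic.
   Context: For an integer $q\ge 2$, a sequence is $q$-automatic if it is the image under a letter-to-letter map of a fixed point of a morphism all of whose letter-images have length $q$. *)

theory Defs
  imports Main
begin

text \<open>The word u is a fixed point of the morphism s iff s(u) = u, i.e. for every n the
  image of the length-n prefix of u is a prefix of u.\<close>
definition morph_fixed_point :: "('a \<Rightarrow> 'a list) \<Rightarrow> (nat \<Rightarrow> 'a) \<Rightarrow> bool" where
  "morph_fixed_point s u \<longleftrightarrow>
     (\<forall>n. \<forall>i < length (concat (map (s \<circ> u) [0..<n])).
            concat (map (s \<circ> u) [0..<n]) ! i = u i)"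

text \<open>q-automatic: image under a letter-to-letter map of a fixed point of a
  q-uniform morphism on a finite alphabet (alphabet encoded as a finite set of naturals).\<close>
definition q_automatic :: "nat \<Rightarrow> (nat \<Rightarrow> 'b) \<Rightarrow> bool" where
  "q_automatic q x \<longleftrightarrow> 2 \<le> q \<and>
     (\<exists>(A :: nat set) (t :: nat \<Rightarrow> nat list) (w :: nat \<Rightarrow> nat) (f :: nat \<Rightarrow> 'b).
        finite A \<and> (\<forall>c\<in>A. length (t c) = q \<and> set (t c) \<subseteq> A) \<and>
        (\<forall>n. w n \<in> A) \<and> morph_fixed_point t w \<and> (\<forall>n. x n = f (w n)))"

datatype letter = La | Lb | Lc

fun sigma :: "letter \<Rightarrow> letter list" where
  "sigma La = [La, Lc, La, Lb, La]"
| "sigma Lb = [Lb, La, Lc]"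
| "sigma Lc = [Lc, La, Lb]"

end

theory Submission
  imports Defs
begin

lemma upt2: "[i..<i+2] = [i, Suc i]"
  by (simp add: numeral_2_eq_2)

lemma concat_uniform:
  assumes "\<And>k. k < n \<Longrightarrow> g k = map h [q*k..<q*k+q]"
  shows "concat (map g [0..<n]) = map h [0..<q*n]"
  using assms
proof (induction n)
  case 0 then show ?case by simp
next
  case (Suc n)
  have "[0..<q*Suc n] = [0..<q*n] @ [q*n..<q*n+q]"
    using upt_add_eq_append[of 0 "q*n" q] by (simp add: algebra_simps)
  then show ?case using Suc by simp
qed

lemma fixed_uniform:
  assumes q: "q > 0" and len: "\<forall>c\<in>A. length (t c) = q" and inA: "\<forall>n. w n \<in> A"
    and rec: "\<forall>n. w n = t (w (n div q)) ! (n mod q)"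
  shows "morph_fixed_point t w"
proof -
  have blk: "(t \<circ> w) k = map w [q*k..<q*k+q]" for k
  proof (rule nth_equalityI)
    show "length ((t \<circ> w) k) = length (map w [q * k..<q * k + q])" using len inA by simp
    fix r assume "r < length ((t \<circ> w) k)"
    then have r: "r < q" using len inA by simp
    have "w (q*k + r) = t (w k) ! r" using rec[rule_format, of "q*k+r"] q r by simp
    then show "(t \<circ> w) k ! r = map w [q * k..<q * k + q] ! r" using r by simp
  qed
  show ?thesis unfolding morph_fixed_point_def
    using concat_uniform[of _ "t \<circ> w" w q, OF blk] by simp
qed

fun tau :: "bool \<Rightarrow> bool list" where
  "tau False = [False, True, False, True]"
| "tau True = [False, True, True, False]"

function y :: "nat \<Rightarrow> bool" where
  "y n = (if n = 0 then False else tau (y (n div 4)) ! (n mod 4))"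
  by auto
termination by (relation "measure id") auto

declare y.simps[simp del]

lemma y_rec: "y n = tau (y (n div 4)) ! (n mod 4)"
  by (cases "n = 0") (simp_all add: y.simps[of 0] y.simps[of n])

lemma len_tau[simp]: "length (tau X) = 4" by (cases X) auto

definition code :: "bool \<Rightarrow> letter" where "code X = (if X then Lb else Lc)"

definition U :: "nat \<Rightarrow> letter" where
  "U n = (if even n then La else code (y (n div 2)))"

definition pi :: "bool \<Rightarrow> letter list" where "pi X = [La, code X]"

lemma sigma_pi: "sigma La @ sigma (code X) = concat (map pi (tau X))"
  by (cases X) (simp_all add: pi_def code_def)

lemma y_blocks: "concat (map (tau \<circ> y) [0..<m]) = map y [0..<4*m]"
proof (rule concat_uniform)
  fix k
  show "(tau \<circ> y) k = map y [4*k..<4*k+4]"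
  proof (rule nth_equalityI)
    fix r assume "r < length ((tau \<circ> y) k)"
    then have r: "r < 4" by simp
    then show "(tau \<circ> y) k ! r = map y [4 * k..<4 * k + 4] ! r"
      using y_rec[of "4*k+r"] by simp
  qed simp
qed

lemma U_blocks: "concat (map (pi \<circ> y) [0..<n]) = map U [0..<2*n]"
proof (rule concat_uniform)
  fix k
  show "(pi \<circ> y) k = map U [2*k..<2*k+2]"
    using upt2[of "2*k"] by (simp add: pi_def U_def)
qed

lemma concat_map_concat: "concat (map f (concat xs)) = concat (map (\<lambda>l. concat (map f l)) xs)"
  by (induction xs) auto

lemma sigma_U_even: "concat (map (sigma \<circ> U) [0..<2*m]) = map U [0..<8*m]"
proof -
  have "concat (map (sigma \<circ> U) [0..<2*m]) = concat (map (\<lambda>k. concat (map pi (tau (y k)))) [0..<m])"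
  proof (induction m)
    case 0 then show ?case by simp
  next
    case (Suc m)
    have e: "[0..<2*Suc m] = [0..<2*m] @ [2*m, 2*m+1]"
      using upt2[of "2*m"] upt_add_eq_append[of 0 "2*m" 2] by simp
    show ?case using Suc
      by (simp add: e U_def sigma_pi[symmetric])
  qed
  also have "\<dots> = concat (map pi (concat (map (tau \<circ> y) [0..<m])))"
    by (simp add: concat_map_concat o_def)
  also have "\<dots> = concat (map pi (map y [0..<4*m]))" by (simp add: y_blocks)
  also have "\<dots> = map U [0..<2*(4*m)]" using U_blocks by (simp add: o_def)
  finally show ?thesis by simp
qed

lemma len_sigma: "length (sigma x) \<ge> 3" by (cases x) auto

lemma U_fixed: "morph_fixed_point sigma U"
  unfolding morph_fixed_point_def
proof (intro allI impI)
  fix n i assume i: "i < length (concat (map (sigma \<circ> U) [0..<n]))"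
  have "[0..<2*n] = [0..<n] @ [n..<2*n]" using upt_add_eq_append[of 0 n n] by (simp add: mult_2)
  then have "concat (map (sigma \<circ> U) [0..<2*n]) =
     concat (map (sigma \<circ> U) [0..<n]) @ concat (map (sigma \<circ> U) [n..<2*n])" by simp
  then have "concat (map (sigma \<circ> U) [0..<n]) ! i = map U [0..<8*n] ! i"
    using i sigma_U_even[of n] by (metis nth_append)
  moreover have "i < 8*n" using i sigma_U_even[of n]
    by (metis \<open>concat (map (sigma \<circ> U) [0..<2*n]) = _ @ _\<close> length_append length_map length_upt
        minus_nat.diff_0 trans_less_add1)
  ultimately show "concat (map (sigma \<circ> U) [0..<n]) ! i = U i" by simp
qed

lemma len_concat_ge: "length (concat (map (sigma \<circ> v) [0..<n])) \<ge> 3*n"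
proof (induction n)
  case (Suc n) then show ?case using len_sigma[of "v n"] by simp
qed simp

lemma prefix_same:
  assumes "\<And>j. j < n \<Longrightarrow> u j = v j"
  shows "concat (map (sigma \<circ> u) [0..<n]) = concat (map (sigma \<circ> v) [0..<n])"
  using assms by (intro arg_cong[where f=concat] map_cong) auto

lemma unique:
  assumes fu: "morph_fixed_point sigma u" and u0: "u 0 = La"
  shows "u i = U i"
proof (induction i rule: less_induct)
  case (less i)
  show ?case
  proof (cases "i = 0")
    case True then show ?thesis using u0 by (simp add: U_def)
  next
    case False
    have lt: "i < length (concat (map (sigma \<circ> u) [0..<i]))"
      using len_concat_ge[where v=u and n=i] False by linarith
    have eq: "concat (map (sigma \<circ> u) [0..<i]) = concat (map (sigma \<circ> U) [0..<i])"
      using less by (intro prefix_same) auto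
    have "u i = concat (map (sigma \<circ> u) [0..<i]) ! i"
      using fu lt unfolding morph_fixed_point_def by metis
    also have "\<dots> = U i" using U_fixed lt unfolding eq morph_fixed_point_def by metis
    finally show ?thesis .
  qed
qed

definition b2n :: "bool \<Rightarrow> nat" where "b2n X = (if X then 1 else 0)"

definition t4 :: "nat \<Rightarrow> nat list" where
  "t4 c = (let X = (c div 2 = 1); j = c mod 2 in
     [2 * b2n (tau X ! (2*j)), 2 * b2n (tau X ! (2*j)) + 1,
      2 * b2n (tau X ! (2*j+1)), 2 * b2n (tau X ! (2*j+1)) + 1])"

definition w4 :: "nat \<Rightarrow> nat" where "w4 n = 2 * b2n (y (n div 2)) + n mod 2"

definition f4 :: "nat \<Rightarrow> letter" where
  "f4 c = (if c mod 2 = 0 then La else if c div 2 = 1 then Lb else Lc)"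

lemma y4: "k < 4 \<Longrightarrow> y (4*m + k) = tau (y m) ! k"
  using y_rec[of "4*m+k"] by simp

lemma t4_enc: "j < 2 \<Longrightarrow> t4 (2*b2n P + j) =
   [2 * b2n (tau P ! (2*j)), 2 * b2n (tau P ! (2*j)) + 1,
      2 * b2n (tau P ! (2*j+1)), 2 * b2n (tau P ! (2*j+1)) + 1]"
proof -
  assume j: "j < 2"
  define c where "c = 2*b2n P + j"
  have jj: "j = 0 \<or> j = 1" using j by linarith
  have c1: "c div 2 = b2n P" unfolding c_def using jj by (cases P; elim disjE) (simp_all add: b2n_def)
  have c2: "c mod 2 = j" unfolding c_def using jj by (cases P; elim disjE) (simp_all add: b2n_def)
  have e1: "(b2n P = 1) = P" by (simp_all add: b2n_def)
  show ?thesis unfolding c_def[symmetric] t4_def Let_def c1 c2 e1 ..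
qed

lemma w4_rec: "w4 n = t4 (w4 (n div 4)) ! (n mod 4)"
proof -
  define m where "m = n div 4 div 2"
  define j where "j = (n div 4) mod 2"
  define r where "r = n mod 4"
  have j: "j < 2" and r: "r < 4" unfolding j_def r_def by simp_all
  have n1: "n = 4 * (n div 4) + r" unfolding r_def by simp
  have n2: "n div 4 = 2*m + j" unfolding m_def j_def by simp
  have n: "n = 4*(2*m+j) + r" using n1 n2 by simp
  have d: "n div 2 = 4*m + (2*j + r div 2)" using n r by simp
  have k: "2*j + r div 2 < 4" using j r by simp
  have yv: "y (n div 2) = tau (y m) ! (2*j + r div 2)" unfolding d by (rule y4[OF k])
  have n4: "n div 4 = 2*m+j" "n mod 4 = r" using n2 r_def by simp_all
  have nm: "n mod 2 = r mod 2" unfolding r_def by (simp add: mod_mod_cancel)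
  have w: "w4 (2*m+j) = 2 * b2n (y m) + j" using j unfolding w4_def by simp
  have jc: "j = 0 \<or> j = 1" using j by linarith
  have rc: "r = 0 \<or> r = 1 \<or> r = 2 \<or> r = 3" using r by linarith
  have lhs: "w4 n = 2 * b2n (tau (y m) ! (2*j + r div 2)) + r mod 2"
    unfolding w4_def yv nm ..
  show ?thesis unfolding n4 w t4_enc[OF j] lhs using rc by (elim disjE) simp_all
qed

lemma b2n_eq: "(b2n X = 1) = X" "(b2n X div 2) = 0" "b2n X < 2" by (simp_all add: b2n_def)

lemma aut4: "q_automatic 4 U"
  unfolding q_automatic_def
proof (intro conjI exI[of _ "{0..<4}"] exI[of _ t4] exI[of _ w4] exI[of _ f4])
  show len: "\<forall>c\<in>{0..<4}. length (t4 c) = 4 \<and> set (t4 c) \<subseteq> {0..<4}"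
    by (auto simp: t4_def Let_def b2n_def)
  show w: "\<forall>n. w4 n \<in> {0..<4}" by (auto simp: w4_def b2n_def)
  show "morph_fixed_point t4 w4"
    by (rule fixed_uniform[where A="{0..<4}" and q=4]) (simp, use len in blast, use w in blast, use w4_rec in blast)
  show "\<forall>n. U n = f4 (w4 n)"
  proof
    fix n :: nat
    have "n mod 2 = 0 \<or> n mod 2 = 1" by arith
    then show "U n = f4 (w4 n)"
      by (cases "y n"; cases "y (n div 2)") (auto simp: U_def f4_def w4_def b2n_def code_def even_iff_mod_2_eq_zero)
  qed
qed simp_all

definition t2 :: "nat \<Rightarrow> nat list" where
  "t2 c = (let P = (c div 4 = 1); j = (c div 2) mod 2; Q = (c mod 2 = 1) in
     [4 * b2n Q + b2n (tau P ! (2*j)), 4 * b2n Q + 2 + b2n (tau P ! (2*j+1))])"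

definition w2 :: "nat \<Rightarrow> nat" where
  "w2 n = 4 * b2n (y (n div 2)) + 2 * (n mod 2) + b2n (y n)"

definition f2 :: "nat \<Rightarrow> letter" where
  "f2 c = (if (c div 2) mod 2 = 0 then La else code (c div 4 = 1))"

lemma t2_enc: "j < 2 \<Longrightarrow> t2 (4*b2n P + 2*j + b2n Q) =
   [4*b2n Q + b2n (tau P ! (2*j)), 4*b2n Q + 2 + b2n (tau P ! (2*j+1))]"
proof -
  assume j: "j < 2"
  define c where "c = 4*b2n P + 2*j + b2n Q"
  have jj: "j = 0 \<or> j = 1" using j by linarith
  have c1: "c div 4 = b2n P" unfolding c_def using jj by (cases P; cases Q; elim disjE) (simp_all add: b2n_def)
  have c2: "(c div 2) mod 2 = j" unfolding c_def using jj by (cases P; cases Q; elim disjE) (simp_all add: b2n_def)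
  have c3: "c mod 2 = b2n Q" unfolding c_def by (simp add: b2n_def)
  have e1: "(b2n P = 1) = P" "(b2n Q = 1) = Q" by (simp_all add: b2n_def)
  show ?thesis unfolding c_def[symmetric] t2_def Let_def c1 c2 c3 e1 ..
qed

lemma w2_rec: "w2 n' = t2 (w2 (n' div 2)) ! (n' mod 2)"
proof -
  define n where "n = n' div 2"
  define r where "r = n' mod 2"
  define m where "m = n div 2"
  define j where "j = n mod 2"
  have n': "n' = 2*n + r" unfolding n_def r_def by simp
  have nn: "n = 2*m + j" unfolding m_def j_def by simp
  have j: "j < 2" and r: "r < 2" unfolding j_def r_def by simp_all
  have k: "2*j + r < 4" using j r by simp
  have e: "n' = 4*m + (2*j+r)" using n' nn by simp
  have yv: "y n' = tau (y m) ! (2*j + r)" unfolding e by (rule y4[OF k])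
  have d: "n' div 2 = n" "n' mod 2 = r" using n_def r_def by simp_all
  have w: "w2 n = 4 * b2n (y m) + 2 * j + b2n (y n)" unfolding w2_def m_def j_def by simp
  have jc: "j = 0 \<or> j = 1" using j by linarith
  have rc: "r = 0 \<or> r = 1" using r by linarith
  have lhs: "w2 n' = 4 * b2n (y n) + 2 * r + b2n (tau (y m) ! (2*j + r))"
    unfolding w2_def d yv by simp
  show ?thesis unfolding d w t2_enc[OF j] lhs using rc by (elim disjE) simp_all

qed

lemma aut2: "q_automatic 2 U"
  unfolding q_automatic_def
proof (intro conjI exI[of _ "{0..<8}"] exI[of _ t2] exI[of _ w2] exI[of _ f2])
  show len: "\<forall>c\<in>{0..<8}. length (t2 c) = 2 \<and> set (t2 c) \<subseteq> {0..<8}"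
    by (auto simp: t2_def Let_def b2n_def)
  show w: "\<forall>n. w2 n \<in> {0..<8}" by (auto simp: w2_def b2n_def)
  show "morph_fixed_point t2 w2"
    by (rule fixed_uniform[where A="{0..<8}" and q=2]) (simp, use len in blast, use w in blast, use w2_rec in blast)
  show "\<forall>n. U n = f2 (w2 n)"
  proof
    fix n :: nat
    have "n mod 2 = 0 \<or> n mod 2 = 1" by arith
    then show "U n = f2 (w2 n)"
      by (cases "y n"; cases "y (n div 2)") (auto simp: U_def f2_def w2_def b2n_def code_def even_iff_mod_2_eq_zero)
  qed
qed simp_all

theorem mainTheorem8:
  fixes u :: "nat \<Rightarrow> letter"
  assumes "morph_fixed_point sigma u" and "u 0 = La"
  shows "q_automatic 4 u \<and> q_automatic 2 u"
proof -
  have "u = U" using unique[OF assms] by auto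
  then show ?thesis using aut4 aut2 by simp
qed

end
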